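(* Let $\mathcal{L}$ be a nonempty set and $\mathcal{C}: 2^{\mathcal{L}}\to 2^{\mathcal{L}}$ a C-logics. A set $A\subseteq\mathcal{L}$ is inconsistent iff $\mathrm{Cn}(A)=\mathcal{L}$.
   Context: A C-logics is a map $\mathcal{C}: 2^{\mathcal{L}}\to 2^{\mathcal{L}}$ satisfying Inclusion ($A\subseteq\mathcal{C}(A)$) and Cumulativity ($A\subseteq B\subseteq\mathcal{C}(A)\Rightarrow\mathcal{C}(A)=\mathcal{C}(B)$) for all $A,B\subseteq\mathcal{L}$. $A$ is inconsistent iff $\mathcal{C}(A)=\mathcal{L}$. A theory is a set $T\subseteq\mathcal{L}$ with $\mathcal{C}(T)=T$. $\mathrm{Cn}(A)=\bigcap\{T : T\supseteq A,\ T \text{ a theory}\}$. *)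

theory Defs
  imports Main
begin

definition C_logics :: "'a set \<Rightarrow> ('a set \<Rightarrow> 'a set) \<Rightarrow> bool" where
  "C_logics L C \<longleftrightarrow>
     (\<forall>A. A \<subseteq> L \<longrightarrow> C A \<subseteq> L) \<and>
     (\<forall>A. A \<subseteq> L \<longrightarrow> A \<subseteq> C A) \<and>
     (\<forall>A B. A \<subseteq> L \<longrightarrow> B \<subseteq> L \<longrightarrow> A \<subseteq> B \<longrightarrow> B \<subseteq> C A \<longrightarrow> C A = C B)"

definition inconsistent :: "'a set \<Rightarrow> ('a set \<Rightarrow> 'a set) \<Rightarrow> 'a set \<Rightarrow> bool" where
  "inconsistent L C A \<longleftrightarrow> C A = L"

definition is_theory :: "'a set \<Rightarrow> ('a set \<Rightarrow> 'a set) \<Rightarrow> 'a set \<Rightarrow> bool" where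
  "is_theory L C T \<longleftrightarrow> T \<subseteq> L \<and> C T = T"

definition Cn :: "'a set \<Rightarrow> ('a set \<Rightarrow> 'a set) \<Rightarrow> 'a set \<Rightarrow> 'a set" where
  "Cn L C A = \<Inter>{T. A \<subseteq> T \<and> is_theory L C T}"

end

theory Submission
  imports Defs
begin

lemma CL_sub: "C_logics L C \<Longrightarrow> A \<subseteq> L \<Longrightarrow> C A \<subseteq> L"
proof -
  assume h: "C_logics L C" "A \<subseteq> L"
  have "\<forall>A. A \<subseteq> L \<longrightarrow> C A \<subseteq> L" using h(1) unfolding C_logics_def by (rule conjunct1)
  thus ?thesis using h(2) by (rule_tac mp, erule_tac allE)
qed

lemma CL_inc: "C_logics L C \<Longrightarrow> A \<subseteq> L \<Longrightarrow> A \<subseteq> C A"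
proof -
  assume h: "C_logics L C" "A \<subseteq> L"
  have "\<forall>A. A \<subseteq> L \<longrightarrow> A \<subseteq> C A" using h(1) unfolding C_logics_def by (rule conjunct1[OF conjunct2])
  thus ?thesis using h(2) by (rule_tac mp, erule_tac allE)
qed

lemma CL_cum: "C_logics L C \<Longrightarrow> A \<subseteq> L \<Longrightarrow> B \<subseteq> L \<Longrightarrow> A \<subseteq> B \<Longrightarrow> B \<subseteq> C A \<Longrightarrow> C A = C B"
proof -
  assume h: "C_logics L C" "A \<subseteq> L" "B \<subseteq> L" "A \<subseteq> B" "B \<subseteq> C A"
  have "\<forall>A B. A \<subseteq> L \<longrightarrow> B \<subseteq> L \<longrightarrow> A \<subseteq> B \<longrightarrow> B \<subseteq> C A \<longrightarrow> C A = C B"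
    using h(1) unfolding C_logics_def by (rule conjunct2[OF conjunct2])
  from this[rule_format, OF h(2) h(3) h(4) h(5)] show ?thesis .
qed

theorem lemma9:
  fixes L :: "'a set" and C :: "'a set \<Rightarrow> 'a set" and A :: "'a set"
  assumes "L \<noteq> {}" and "C_logics L C" and "A \<subseteq> L"
  shows "inconsistent L C A \<longleftrightarrow> Cn L C A = L"
proof -
  have sub: "C A \<subseteq> L" using CL_sub assms(2,3) .
  have inc: "A \<subseteq> C A" using CL_inc assms(2,3) .
  have cum: "C A = C B" if "B \<subseteq> L" "A \<subseteq> B" "B \<subseteq> C A" for B
    using CL_cum[OF assms(2,3) that] .
  have "C (C A) = C A" using cum[OF sub inc order_refl] by (rule sym)
  hence th: "is_theory L C (C A)" using sub unfolding is_theory_def by blast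
  show ?thesis
  proof
    assume "inconsistent L C A"
    hence CA: "C A = L" by (simp add: inconsistent_def)
    have T: "T = L" if "A \<subseteq> T" "is_theory L C T" for T
    proof -
      have TL: "T \<subseteq> L" and CT: "C T = T" using that(2) unfolding is_theory_def by blast+
      have "T \<subseteq> C A" using TL CA by blast
      hence "C A = C T" using cum TL that(1) by blast
      thus ?thesis using CA CT by simp
    qed
    have "{T. A \<subseteq> T \<and> is_theory L C T} = {L}"
    proof
      show "{T. A \<subseteq> T \<and> is_theory L C T} \<subseteq> {L}" using T by blast
      show "{L} \<subseteq> {T. A \<subseteq> T \<and> is_theory L C T}" using th CA inc by simp
    qed
    thus "Cn L C A = L" by (simp add: Cn_def)
  next
    assume "Cn L C A = L"
    moreover have "Cn L C A \<subseteq> C A" using th inc unfolding Cn_def by blast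
    ultimately show "inconsistent L C A" using sub by (auto simp: inconsistent_def)
  qed
qed

end
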